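(* Suppose $J$ satisfies (J) and (J1). Then for every $\epsilon\in(0,1)$, $\lim_{R\to\infty}\int_0^{(1-\epsilon)R}\int_R^\infty\tilde J_+(r,\rho)\,d\rho\,dr=0$ and $\lim_{R\to\infty}\int_0^R\int_R^\infty\tilde J_-(r,\rho)\,d\rho\,dr=0$.
   Context: $N\ge2$, $B_\rho=\{|x|<\rho\}\subset\mathbb R^N$. (J): $J\in C(\mathbb R_+)\cap L^\infty(\mathbb R_+)$, $J\ge0$, $J(0)>0$, $\int_{\mathbb R^N}J(|x|)dx=1$. (J1): $\int_0^\infty J(r)r^Ndr<\infty$. For $x\ne0$ with $|x|=r$ and $\rho>0$: $\tilde J_+(r,\rho)=\int_{\{y\in\partial B_\rho:\,y\cdot x\ge0\}}J(|x-y|)dS_y$, $\tilde J_-(r,\rho)=\int_{\{y\in\partial B_\rho:\,y\cdot x\le0\}}J(|x-y|)dS_y$. *)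

theory Defs
  imports "HOL-Analysis.Analysis"
begin

text \<open>Surface integral of a nonnegative function over the sphere of radius rho
  centred at 0 in the Euclidean space 'a (dimension N = DIM('a)), via the cone
  (polar-coordinate) formula:
  integral over sphere rho of f dS = N rho^(N-1) * integral over the unit ball of f(rho x/|x|) dx.\<close>
definition sphere_nn_integral :: "real \<Rightarrow> ('a::euclidean_space \<Rightarrow> real) \<Rightarrow> ennreal" where
  "sphere_nn_integral \<rho> f =
     ennreal (real DIM('a) * \<rho> ^ (DIM('a) - 1)) *
     (\<integral>\<^sup>+ x \<in> ball (0::'a) 1. ennreal (f (\<rho> *\<^sub>R (x /\<^sub>R norm x))) \<partial>lborel)"

text \<open>J-tilde-plus / J-tilde-minus at the point x = r e (e a unit vector, |x| = r).\<close>
definition Jt_plus :: "(real \<Rightarrow> real) \<Rightarrow> 'a::euclidean_space \<Rightarrow> real \<Rightarrow> real \<Rightarrow> ennreal" where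
  "Jt_plus J e r \<rho> = sphere_nn_integral \<rho>
     (\<lambda>y::'a. if y \<bullet> (r *\<^sub>R e) \<ge> 0 then J (norm (r *\<^sub>R e - y)) else 0)"

definition Jt_minus :: "(real \<Rightarrow> real) \<Rightarrow> 'a::euclidean_space \<Rightarrow> real \<Rightarrow> real \<Rightarrow> ennreal" where
  "Jt_minus J e r \<rho> = sphere_nn_integral \<rho>
     (\<lambda>y::'a. if y \<bullet> (r *\<^sub>R e) \<le> 0 then J (norm (r *\<^sub>R e - y)) else 0)"

end

theory Submission
  imports Defs
begin

lemma stepB:
  fixes J :: "real \<Rightarrow> real" and N :: nat and \<kappa> R r d :: real
  assumes Jm[measurable]: "J \<in> borel_measurable borel" and Jn: "\<And>t. J t \<ge> 0"
    and N: "N \<ge> 2" and \<kappa>: "0 < \<kappa>" and R: "0 < R"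
    and H1: "\<And>\<rho>. \<rho> \<ge> R \<Longrightarrow> \<rho> - d \<ge> \<kappa>*\<rho>"
    and H2: "\<And>\<rho>. \<rho> \<ge> R \<Longrightarrow> \<rho>^2 - 2*\<rho>*d + r^2 \<ge> (\<kappa>*\<rho>)^2"
  shows "(\<integral>\<^sup>+\<rho>. ennreal (indicator {R..} \<rho> * (real N * \<rho>^(N-1) * J (sqrt (\<rho>^2 - 2*\<rho>*d + r^2)))) \<partial>lborel)
     \<le> ennreal (real N / \<kappa>^(N-1)) * (\<integral>\<^sup>+t. ennreal (indicator {\<kappa>*R..} t * (J t * t^(N-1))) \<partial>lborel)"
proof -
  define \<phi> where "\<phi> \<rho> = sqrt (\<rho>^2 - 2*\<rho>*d + r^2)" for \<rho>
  define \<phi>' where "\<phi>' \<rho> = (\<rho> - d) / \<phi> \<rho>" for \<rho>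
  define F where "F t = J t * t^(N-1)" for t
  define K where "K = real N / \<kappa>^(N-1)"
  define T where "T = (\<integral>\<^sup>+t. ennreal (indicator {\<kappa>*R..} t * (J t * t^(N-1))) \<partial>lborel)"
  define m where "m = N - 2"
  have m: "N - 1 = Suc m" "N - 2 = m" using N unfolding m_def by auto
  have qpos: "\<rho>^2 - 2*\<rho>*d + r^2 > 0" if "\<rho> \<ge> R" for \<rho>
  proof -
    have "(\<kappa>*\<rho>)^2 > 0" using \<kappa> R that by simp
    then show ?thesis using H2[OF that] by linarith
  qed
  have phige: "\<phi> \<rho> \<ge> \<kappa>*\<rho>" if "\<rho> \<ge> R" for \<rho>
    unfolding \<phi>_def by (rule real_le_rsqrt) (use H2[OF that] in simp)
  have phipos: "\<phi> \<rho> > 0" if "\<rho> \<ge> R" for \<rho>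
    using phige[OF that] \<kappa> R that by (smt (verit) mult_pos_pos)
  have deriv: "(\<phi> has_real_derivative \<phi>' \<rho>) (at \<rho>)" if "\<rho> \<ge> R" for \<rho>
  proof -
    have q: "((\<lambda>\<rho>. \<rho>^2 - 2*\<rho>*d + r^2) has_real_derivative 2*\<rho> - 2*d) (at \<rho>)"
      by (auto intro!: derivative_eq_intros)
    have "(\<phi> has_real_derivative inverse (sqrt (\<rho>^2 - 2*\<rho>*d + r^2)) / 2 * (2*\<rho> - 2*d)) (at \<rho>)"
      unfolding \<phi>_def by (rule DERIV_chain2[OF DERIV_real_sqrt[OF qpos[OF that]] q])
    moreover have "inverse (sqrt (\<rho>^2 - 2*\<rho>*d + r^2)) / 2 * (2*\<rho> - 2*d) = \<phi>' \<rho>"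
    proof -
      have sp: "sqrt (\<rho>^2 - 2*\<rho>*d + r^2) \<noteq> 0" using qpos[OF that] by simp
      show ?thesis unfolding \<phi>'_def \<phi>_def using sp by (simp add: field_simps)
    qed
    ultimately show ?thesis by simp
  qed
  have cont: "continuous_on {R..b} \<phi>'" for b
  proof -
    have "continuous_on {R..b} (\<lambda>\<rho>. (\<rho> - d) / sqrt (\<rho>^2 - 2*\<rho>*d + r^2))"
    proof (intro continuous_intros ballI)
      fix \<rho> assume "\<rho> \<in> {R..b}"
      hence "\<rho>^2 - 2*\<rho>*d + r^2 > 0" using qpos by simp
      then show "sqrt (\<rho>^2 - 2*\<rho>*d + r^2) \<noteq> 0" by simp
    qed
    then show ?thesis unfolding \<phi>'_def \<phi>_def by simp
  qed
  have pw: "real N * \<rho>^(N-1) * J (\<phi> \<rho>) \<le> K * (F (\<phi> \<rho>) * \<phi>' \<rho>)" if "\<rho> \<ge> R" for \<rho>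
  proof -
    have p: "\<phi> \<rho> > 0" using phipos[OF that] .
    have e1: "F (\<phi> \<rho>) * \<phi>' \<rho> = J (\<phi> \<rho>) * (\<phi> \<rho>^m * (\<rho> - d))"
      unfolding F_def \<phi>'_def m using p by (simp add: field_simps)
    have "(\<kappa>*\<rho>)^m \<le> \<phi> \<rho>^m" using phige[OF that] \<kappa> R that by (intro power_mono) auto
    hence "(\<kappa>*\<rho>)^m * (\<kappa>*\<rho>) \<le> \<phi> \<rho>^m * (\<rho> - d)"
      using H1[OF that] \<kappa> R that p by (intro mult_mono) auto
    hence "\<kappa>^(N-1) * \<rho>^(N-1) \<le> \<phi> \<rho>^m * (\<rho> - d)" unfolding m by (simp add: power_mult_distrib algebra_simps)
    hence A: "K * (\<kappa>^(N-1) * \<rho>^(N-1)) \<le> K * (\<phi> \<rho>^m * (\<rho> - d))"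
      by (rule mult_left_mono) (use \<kappa> in \<open>auto simp: K_def intro!: divide_nonneg_pos\<close>)
    have E: "K * (\<kappa>^(N-1) * \<rho>^(N-1)) = real N * \<rho>^(N-1)" unfolding K_def using \<kappa> by simp
    from A[unfolded E] have "real N * \<rho>^(N-1) \<le> K * (\<phi> \<rho>^m * (\<rho> - d))" .
    hence "real N * \<rho>^(N-1) * J (\<phi> \<rho>) \<le> K * (\<phi> \<rho>^m * (\<rho> - d)) * J (\<phi> \<rho>)"
      using Jn by (intro mult_right_mono) auto
    then show ?thesis unfolding e1 by (simp add: algebra_simps)
  qed
  have bnd: "(\<integral>\<^sup>+\<rho>. ennreal (indicator {R..R + real n} \<rho> * (real N * \<rho>^(N-1) * J (\<phi> \<rho>))) \<partial>lborel) \<le> ennreal K * T" for n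
  proof -
    define b where "b = R + real n"
    have "(\<integral>\<^sup>+\<rho>. ennreal (indicator {R..b} \<rho> * (real N * \<rho>^(N-1) * J (\<phi> \<rho>))) \<partial>lborel)
        \<le> (\<integral>\<^sup>+\<rho>. ennreal K * ennreal (F (\<phi> \<rho>) * \<phi>' \<rho> * indicator {R..b} \<rho>) \<partial>lborel)"
    proof (rule nn_integral_mono)
      fix \<rho> :: real
      show "ennreal (indicator {R..b} \<rho> * (real N * \<rho>^(N-1) * J (\<phi> \<rho>)))
          \<le> ennreal K * ennreal (F (\<phi> \<rho>) * \<phi>' \<rho> * indicator {R..b} \<rho>)"
      proof (cases "\<rho> \<in> {R..b}")
        case True
        have "K \<ge> 0" unfolding K_def using \<kappa> by (auto intro!: divide_nonneg_pos)
        then show ?thesis using True pw[of \<rho>] by (simp add: ennreal_mult'[symmetric] ennreal_leI)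
      qed simp
    qed
    also have "\<dots> = ennreal K * (\<integral>\<^sup>+\<rho>. ennreal (F (\<phi> \<rho>) * \<phi>' \<rho> * indicator {R..b} \<rho>) \<partial>lborel)"
    proof (rule nn_integral_cmult)
      have "(\<lambda>\<rho>. F (\<phi> \<rho>) * \<phi>' \<rho> * indicator {R..b} \<rho>) \<in> borel_measurable borel"
        unfolding F_def \<phi>_def \<phi>'_def by measurable
      then show "(\<lambda>\<rho>. ennreal (F (\<phi> \<rho>) * \<phi>' \<rho> * indicator {R..b} \<rho>)) \<in> borel_measurable lborel"
        by simp
    qed
    also have "(\<integral>\<^sup>+\<rho>. ennreal (F (\<phi> \<rho>) * \<phi>' \<rho> * indicator {R..b} \<rho>) \<partial>lborel)
        = (\<integral>\<^sup>+t. ennreal (F t * indicator {\<phi> R..\<phi> b} t) \<partial>lborel)"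
    proof (rule nn_integral_substitution[symmetric])
      show "set_borel_measurable borel {\<phi> R..\<phi> b} F" unfolding set_borel_measurable_def F_def by measurable
      show "\<And>x. x \<in> {R..b} \<Longrightarrow> (\<phi> has_real_derivative \<phi>' x) (at x)" using deriv by auto
      show "continuous_on {R..b} \<phi>'" by (rule cont)
      show "\<And>x. x \<in> {R..b} \<Longrightarrow> 0 \<le> \<phi>' x"
        unfolding \<phi>'_def using phipos H1 \<kappa> R by (smt (verit) atLeastAtMost_iff divide_nonneg_pos mult_pos_pos)
      show "R \<le> b" unfolding b_def by simp
    qed
    also have "\<dots> \<le> T" unfolding T_def
    proof (rule nn_integral_mono)
      fix t :: real
      show "ennreal (F t * indicator {\<phi> R..\<phi> b} t) \<le> ennreal (indicator {\<kappa>*R..} t * (J t * t^(N-1)))"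
      proof (cases "t \<in> {\<phi> R..\<phi> b}")
        case True
        hence "t \<ge> \<kappa>*R" using phige[of R] by auto
        then show ?thesis using True unfolding F_def by simp
      qed simp
    qed
    finally show ?thesis unfolding b_def by (simp add: mult_left_mono)
  qed
  have "(\<integral>\<^sup>+\<rho>. ennreal (indicator {R..} \<rho> * (real N * \<rho>^(N-1) * J (\<phi> \<rho>))) \<partial>lborel)
      = (\<integral>\<^sup>+\<rho>. (SUP n. ennreal (indicator {R..R + real n} \<rho> * (real N * \<rho>^(N-1) * J (\<phi> \<rho>)))) \<partial>lborel)"
  proof (rule nn_integral_cong)
    fix \<rho> :: real
    show "ennreal (indicator {R..} \<rho> * (real N * \<rho>^(N-1) * J (\<phi> \<rho>)))
        = (SUP n. ennreal (indicator {R..R + real n} \<rho> * (real N * \<rho>^(N-1) * J (\<phi> \<rho>))))"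
    proof (cases "\<rho> \<ge> R")
      case True
      obtain n :: nat where n0: "\<rho> - R \<le> real n" using real_arch_simple[of "\<rho> - R"] by blast
      hence n: "\<rho> \<le> R + real n" by linarith
      have s0: "real N * \<rho>^(N-1) * J (\<phi> \<rho>) \<ge> 0" using True R Jn by simp
      show ?thesis
      proof (rule antisym)
        show "ennreal (indicator {R..} \<rho> * (real N * \<rho>^(N-1) * J (\<phi> \<rho>)))
          \<le> (SUP n. ennreal (indicator {R..R + real n} \<rho> * (real N * \<rho>^(N-1) * J (\<phi> \<rho>))))"
          by (rule SUP_upper2[of n]) (use True n in auto)
        show "(SUP n. ennreal (indicator {R..R + real n} \<rho> * (real N * \<rho>^(N-1) * J (\<phi> \<rho>))))
          \<le> ennreal (indicator {R..} \<rho> * (real N * \<rho>^(N-1) * J (\<phi> \<rho>)))"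
          by (rule SUP_least) (use True s0 in \<open>auto simp: indicator_def intro!: ennreal_leI\<close>)
      qed
    qed simp
  qed
  also have "\<dots> = (SUP n. (\<integral>\<^sup>+\<rho>. ennreal (indicator {R..R + real n} \<rho> * (real N * \<rho>^(N-1) * J (\<phi> \<rho>))) \<partial>lborel))"
  proof (rule nn_integral_monotone_convergence_SUP)
    show "incseq (\<lambda>n \<rho>. ennreal (indicator {R..R + real n} \<rho> * (real N * \<rho>^(N-1) * J (\<phi> \<rho>))))"
    proof (rule incseq_SucI, rule le_funI)
      fix n \<rho>
      show "ennreal (indicator {R..R + real n} \<rho> * (real N * \<rho>^(N-1) * J (\<phi> \<rho>)))
          \<le> ennreal (indicator {R..R + real (Suc n)} \<rho> * (real N * \<rho>^(N-1) * J (\<phi> \<rho>)))"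
        using R Jn by (auto simp: indicator_def intro!: ennreal_leI)
    qed
    show "\<And>i. (\<lambda>\<rho>. ennreal (indicator {R..R + real i} \<rho> * (real N * \<rho>^(N-1) * J (\<phi> \<rho>)))) \<in> borel_measurable lborel"
      unfolding \<phi>_def by measurable
  qed
  also have "\<dots> \<le> ennreal K * T" by (rule SUP_least) (rule bnd)
  finally show ?thesis unfolding K_def T_def \<phi>_def .
qed


lemma sphere_fubini:
  fixes f :: "'a::euclidean_space \<Rightarrow> real" and R :: real and M :: ennreal
  assumes fm[measurable]: "f \<in> borel_measurable borel" and fn: "\<And>y. f y \<ge> 0" and R: "R \<ge> 0"
    and bound: "\<And>u::'a. norm u = 1 \<Longrightarrow>
      (\<integral>\<^sup>+\<rho>. ennreal (indicator {R..} \<rho> * (real DIM('a) * \<rho>^(DIM('a)-1) * f (\<rho> *\<^sub>R u))) \<partial>lborel) \<le> M"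
  shows "(\<integral>\<^sup>+\<rho>\<in>{R..}. sphere_nn_integral \<rho> f \<partial>lborel) \<le> M * emeasure lborel (ball (0::'a) 1)"
proof -
  let ?N = "DIM('a)"
  have [measurable]: "ball (0::'a) 1 \<in> sets borel" by simp
  define G where "G x \<rho> = ennreal (indicator (ball (0::'a) 1) x * (indicator {R..} \<rho> * (real ?N * \<rho>^(?N-1) * f (\<rho> *\<^sub>R (x /\<^sub>R norm x)))))" for x \<rho>
  have Gm: "case_prod G \<in> borel_measurable (lborel \<Otimes>\<^sub>M lborel)"
  proof -
    have "(\<lambda>p::'a\<times>real. ennreal (indicator (ball (0::'a) 1) (fst p) * (indicator {R..} (snd p) * (real ?N * (snd p)^(?N-1) * f ((snd p) *\<^sub>R (fst p /\<^sub>R norm (fst p))))))) \<in> borel_measurable (borel \<Otimes>\<^sub>M borel)"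
      by measurable
    then show ?thesis unfolding G_def split_beta'
      by (simp add: measurable_cong_sets[OF sets_pair_measure_cong[OF sets_lborel sets_lborel] refl])
  qed
  have "(\<integral>\<^sup>+\<rho>\<in>{R..}. sphere_nn_integral \<rho> f \<partial>lborel) = (\<integral>\<^sup>+\<rho>. (\<integral>\<^sup>+x. G x \<rho> \<partial>lborel) \<partial>lborel)"
  proof (rule nn_integral_cong)
    fix \<rho> :: real
    show "sphere_nn_integral \<rho> f * indicator {R..} \<rho> = (\<integral>\<^sup>+x. G x \<rho> \<partial>lborel)"
    proof (cases "\<rho> \<ge> R")
      case True
      have "sphere_nn_integral \<rho> f * indicator {R..} \<rho> = ennreal (real ?N * \<rho>^(?N-1)) *
         (\<integral>\<^sup>+ x. ennreal (f (\<rho> *\<^sub>R (x /\<^sub>R norm x))) * indicator (ball 0 1) x \<partial>lborel)"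
        using True unfolding sphere_nn_integral_def by simp
      also have "\<dots> = (\<integral>\<^sup>+ x. ennreal (real ?N * \<rho>^(?N-1)) * (ennreal (f (\<rho> *\<^sub>R (x /\<^sub>R norm x))) * indicator (ball 0 1) x) \<partial>lborel)"
        by (rule nn_integral_cmult[symmetric]) measurable
      also have "\<dots> = (\<integral>\<^sup>+x. G x \<rho> \<partial>lborel)"
        using True R fn unfolding G_def
        by (intro nn_integral_cong) (auto simp: indicator_def ennreal_mult)
      finally show ?thesis .
    qed (simp add: G_def)
  qed
  also have "\<dots> = (\<integral>\<^sup>+x. (\<integral>\<^sup>+\<rho>. G x \<rho> \<partial>lborel) \<partial>lborel)"
    by (rule lborel_pair.Fubini'[OF Gm])
  also have "\<dots> \<le> (\<integral>\<^sup>+x. M * indicator (ball (0::'a) 1) x \<partial>lborel)"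
  proof (rule nn_integral_mono_AE)
    show "AE x in lborel. (\<integral>\<^sup>+\<rho>. G x \<rho> \<partial>lborel) \<le> M * indicator (ball (0::'a) 1) x"
    proof (rule eventually_mono[OF AE_lborel_singleton[of 0]])
      fix x :: 'a assume x0: "x \<noteq> 0"
      show "(\<integral>\<^sup>+\<rho>. G x \<rho> \<partial>lborel) \<le> M * indicator (ball (0::'a) 1) x"
      proof (cases "x \<in> ball 0 1")
        case True
        have "(\<integral>\<^sup>+\<rho>. G x \<rho> \<partial>lborel) = (\<integral>\<^sup>+\<rho>. ennreal (indicator {R..} \<rho> * (real ?N * \<rho>^(?N-1) * f (\<rho> *\<^sub>R (x /\<^sub>R norm x)))) \<partial>lborel)"
          using True unfolding G_def by simp
        also have "\<dots> \<le> M" by (rule bound) (use x0 in simp)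
        finally show ?thesis using True by simp
      qed (simp add: G_def)
    qed
  qed
  also have "\<dots> = M * emeasure lborel (ball (0::'a) 1)"
    by (rule nn_integral_cmult_indicator) simp
  finally show ?thesis .
qed


lemma tail:
  fixes J :: "real \<Rightarrow> real" and N :: nat
  assumes Jm[measurable]: "J \<in> borel_measurable borel" and Jn: "\<And>t. J t \<ge> 0"
    and I: "(\<lambda>t. J t * t^N) integrable_on {0..}"
  shows "((\<lambda>L. \<integral>\<^sup>+t. ennreal (indicator {L..} t * (J t * t^N)) \<partial>lborel) \<longlongrightarrow> 0) at_top"
proof -
  define S where "S L = (\<integral>\<^sup>+t. ennreal (indicator {L..} t * (J t * t^N)) \<partial>lborel)" for L
  obtain I0 where hI: "((\<lambda>t. J t * t^N) has_integral I0) {0..}" using I by blast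
  have "S 0 = ennreal I0" unfolding S_def
    by (rule nn_integral_has_integral_lebesgue[OF _ hI]) (use Jn in auto)
  hence fin: "S 0 < \<infinity>" by simp
  have mono: "S L' \<le> S L" if "L \<le> L'" "0 \<le> L" for L L'
    unfolding S_def using that Jn
    by (intro nn_integral_mono ennreal_leI) (auto simp: indicator_def)
  have "(\<lambda>n. S (real n)) \<longlonglongrightarrow> (INF n. S (real n))"
    by (rule LIMSEQ_INF) (auto simp: decseq_def intro!: mono)
  moreover have "(INF n. S (real n)) = 0"
  proof -
    have "(\<integral>\<^sup>+t. (INF n. ennreal (indicator {real n..} t * (J t * t^N))) \<partial>lborel) = (INF n. S (real n))"
      unfolding S_def
    proof (rule nn_integral_monotone_convergence_INF_decseq)
      show "decseq (\<lambda>n t. ennreal (indicator {real n..} t * (J t * t^N)))"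
      proof (rule decseq_SucI, rule le_funI)
        fix n t
        have "J t * t^N \<ge> 0" if "t \<ge> 0" using Jn[of t] that by simp
        then show "ennreal (indicator {real (Suc n)..} t * (J t * t^N)) \<le> ennreal (indicator {real n..} t * (J t * t^N))"
          by (auto simp: indicator_def intro!: ennreal_leI)
      qed
      show "\<And>i. (\<lambda>t. ennreal (indicator {real i..} t * (J t * t^N))) \<in> borel_measurable lborel"
        by measurable
      show "(\<integral>\<^sup>+t. ennreal (indicator {real i..} t * (J t * t^N)) \<partial>lborel) < \<infinity>" for i
        using mono[of 0 "real i"] fin unfolding S_def by simp
    qed
    moreover have "(INF n. ennreal (indicator {real n..} t * (J t * t^N))) = 0" for t
    proof -
      obtain n :: nat where "t < real n" using reals_Archimedean2 by blast
      hence "(INF n. ennreal (indicator {real n..} t * (J t * t^N))) \<le> 0"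
        by (intro INF_lower2[of n]) auto
      then show ?thesis by simp
    qed
    ultimately show ?thesis by simp
  qed
  ultimately have lim: "(\<lambda>n. S (real n)) \<longlonglongrightarrow> 0" by simp
  have fl: "filterlim (\<lambda>L::real. nat \<lfloor>L\<rfloor>) sequentially at_top"
    by (rule filterlim_compose[OF filterlim_nat_sequentially filterlim_floor_sequentially])
  have "((\<lambda>L::real. S (real (nat \<lfloor>L\<rfloor>))) \<longlongrightarrow> 0) at_top"
    using filterlim_compose[OF lim fl] by (simp add: o_def)
  moreover have "eventually (\<lambda>L::real. S L \<le> S (real (nat \<lfloor>L\<rfloor>))) at_top"
    using eventually_ge_at_top[of "0::real"]
    by eventually_elim (rule mono, auto)
  ultimately have "(S \<longlongrightarrow> 0) at_top"
    by (intro tendsto_sandwich[of "\<lambda>_. 0" S _ "\<lambda>L. S (real (nat \<lfloor>L\<rfloor>))"]) auto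
  then show ?thesis unfolding S_def by simp
qed

lemma scale:
  fixes J :: "real \<Rightarrow> real" and N :: nat and \<kappa> R a :: real
  assumes Jm[measurable]: "J \<in> borel_measurable borel" and Jn: "\<And>t. J t \<ge> 0"
    and N: "N \<ge> 1" and \<kappa>: "0 < \<kappa>" and R: "0 < R" and a: "0 \<le> a" "a \<le> R"
  shows "ennreal a * (\<integral>\<^sup>+t. ennreal (indicator {\<kappa>*R..} t * (J t * t^(N-1))) \<partial>lborel)
     \<le> ennreal (1/\<kappa>) * (\<integral>\<^sup>+t. ennreal (indicator {\<kappa>*R..} t * (J t * t^N)) \<partial>lborel)"
proof -
  have "ennreal a * (\<integral>\<^sup>+t. ennreal (indicator {\<kappa>*R..} t * (J t * t^(N-1))) \<partial>lborel)
      = (\<integral>\<^sup>+t. ennreal a * ennreal (indicator {\<kappa>*R..} t * (J t * t^(N-1))) \<partial>lborel)"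
    by (rule nn_integral_cmult[symmetric]) measurable
  also have "\<dots> \<le> (\<integral>\<^sup>+t. ennreal (1/\<kappa>) * ennreal (indicator {\<kappa>*R..} t * (J t * t^N)) \<partial>lborel)"
  proof (rule nn_integral_mono)
    fix t :: real
    show "ennreal a * ennreal (indicator {\<kappa>*R..} t * (J t * t^(N-1)))
        \<le> ennreal (1/\<kappa>) * ennreal (indicator {\<kappa>*R..} t * (J t * t^N))"
    proof (cases "t \<ge> \<kappa>*R")
      case True
      have t0: "t > 0" using True \<kappa> R by (smt (verit) mult_pos_pos)
      have tN: "t^N = t * t^(N-1)" using N by (metis Suc_diff_le diff_Suc_1 power_Suc)
      have "a * t^(N-1) \<le> R * t^(N-1)" using a t0 by (intro mult_right_mono) auto
      also have "R * t^(N-1) \<le> (t/\<kappa>) * t^(N-1)"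
        using True \<kappa> t0 by (intro mult_right_mono) (auto simp: field_simps)
      finally have "a * t^(N-1) \<le> 1/\<kappa> * t^N" unfolding tN by simp
      hence "(a * t^(N-1)) * J t \<le> (1/\<kappa> * t^N) * J t"
        by (rule mult_right_mono) (rule Jn)
      hence "a * (J t * t^(N-1)) \<le> 1/\<kappa> * (J t * t^N)"
        by (simp add: mult_ac)
      then show ?thesis using True a \<kappa> t0 Jn[of t]
        by (simp add: ennreal_mult[symmetric] ennreal_leI)
    qed simp
  qed
  also have "\<dots> = ennreal (1/\<kappa>) * (\<integral>\<^sup>+t. ennreal (indicator {\<kappa>*R..} t * (J t * t^N)) \<partial>lborel)"
    by (rule nn_integral_cmult) measurable
  finally show ?thesis .
qed

lemma outer:
  fixes F :: "real \<Rightarrow> ennreal"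
  assumes "0 \<le> a" "\<And>r. r \<in> {0..a} \<Longrightarrow> F r \<le> C"
  shows "(\<integral>\<^sup>+r\<in>{0..a}. F r \<partial>lborel) \<le> C * ennreal a"
proof -
  have "(\<integral>\<^sup>+r\<in>{0..a}. F r \<partial>lborel) \<le> (\<integral>\<^sup>+r. C * indicator {0..a} r \<partial>lborel)"
    using assms(2) by (intro nn_integral_mono) (auto simp: indicator_def)
  also have "\<dots> = C * emeasure lborel {0..a}" by (rule nn_integral_cmult_indicator) simp
  finally show ?thesis using assms(1) by simp
qed

lemma normeq:
  fixes e u :: "'a::euclidean_space"
  assumes "norm e = 1" "norm u = 1"
  shows "norm (r *\<^sub>R e - \<rho> *\<^sub>R u) = sqrt (\<rho>^2 - 2*\<rho>*(r*(e \<bullet> u)) + r^2)"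
proof -
  have ee: "e \<bullet> e = 1" "u \<bullet> u = 1" using assms by (simp_all add: dot_square_norm)
  have "(r *\<^sub>R e - \<rho> *\<^sub>R u) \<bullet> (r *\<^sub>R e - \<rho> *\<^sub>R u) = r^2 * (e \<bullet> e) - 2*\<rho>*(r*(e \<bullet> u)) + \<rho>^2 * (u \<bullet> u)"
    by (simp add: inner_diff_left inner_diff_right inner_commute power2_eq_square algebra_simps)
  then show ?thesis using ee by (simp add: norm_eq_sqrt_inner algebra_simps)
qed


lemma plus_pw_bounds:
  fixes \<epsilon> R r d \<rho> :: real
  assumes eps: "0 < \<epsilon>" "\<epsilon> < 1" and R: "R > 0" and r: "0 \<le> r" "r \<le> (1-\<epsilon>)*R"
    and d: "d \<le> r" and \<rho>: "\<rho> \<ge> R"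
  shows "\<rho> - d \<ge> \<epsilon>*\<rho>" "\<rho>^2 - 2*\<rho>*d + r^2 \<ge> (\<epsilon>*\<rho>)^2"
proof -
  have "(1-\<epsilon>)*R \<le> (1-\<epsilon>)*\<rho>" using eps \<rho> by (intro mult_left_mono) auto
  hence r2: "r \<le> \<rho> - \<epsilon>*\<rho>" using r by (simp add: algebra_simps)
  then show "\<rho> - d \<ge> \<epsilon>*\<rho>" using d by linarith
  have "\<rho>*d \<le> \<rho>*r" using d \<rho> R by (intro mult_left_mono) auto
  hence "\<rho>^2 - 2*\<rho>*d + r^2 \<ge> (\<rho> - r)^2" by (simp add: power2_diff algebra_simps)
  moreover have "(\<epsilon>*\<rho>)^2 \<le> (\<rho> - r)^2" using r2 eps \<rho> R by (intro power_mono) auto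
  ultimately show "\<rho>^2 - 2*\<rho>*d + r^2 \<ge> (\<epsilon>*\<rho>)^2" by linarith
qed

lemma minus_pw_bounds:
  fixes R r d \<rho> :: real
  assumes R: "R > 0" and d: "d \<le> 0" and \<rho>: "\<rho> \<ge> R"
  shows "\<rho> - d \<ge> 1*\<rho>" "\<rho>^2 - 2*\<rho>*d + r^2 \<ge> (1*\<rho>)^2"
proof -
  show "\<rho> - d \<ge> 1*\<rho>" using d by simp
  have "\<rho>*d \<le> 0" using d \<rho> R by (simp add: mult_nonneg_nonpos)
  moreover have "2*\<rho>*d = 2*(\<rho>*d)" by simp
  moreover have "r^2 \<ge> 0" by simp
  moreover have "(1*\<rho>)^2 = \<rho>^2" by simp
  ultimately show "\<rho>^2 - 2*\<rho>*d + r^2 \<ge> (1*\<rho>)^2" by linarith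
qed

lemma abs_inner_le1:
  fixes e u :: "'a::euclidean_space"
  assumes "norm e = 1" "norm u = 1"
  shows "e \<bullet> u \<le> 1"
  using Cauchy_Schwarz_ineq2[of e u] assms by simp

lemma core_plus:
  fixes J :: "real \<Rightarrow> real" and e :: "'a::euclidean_space" and \<epsilon> :: real
  assumes Jm[measurable]: "J \<in> borel_measurable borel" and Jn: "\<And>t. J t \<ge> 0"
    and dim: "DIM('a) \<ge> 2"
    and J1: "(\<lambda>r. J r * r ^ DIM('a)) integrable_on {0..}"
    and e: "norm e = 1" and eps: "0 < \<epsilon>" "\<epsilon> < 1"
  shows "((\<lambda>R. \<integral>\<^sup>+ r \<in> {0..(1 - \<epsilon>) * R}. (\<integral>\<^sup>+ \<rho> \<in> {R..}. Jt_plus J e r \<rho> \<partial>lborel) \<partial>lborel) \<longlongrightarrow> 0) at_top"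
proof -
  let ?N = "DIM('a)"
  define K where "K = real ?N / \<epsilon>^(?N-1)"
  define T where "T L = (\<integral>\<^sup>+t. ennreal (indicator {L..} t * (J t * t^(?N-1))) \<partial>lborel)" for L
  define S where "S L = (\<integral>\<^sup>+t. ennreal (indicator {L..} t * (J t * t^?N)) \<partial>lborel)" for L
  define V where "V = emeasure lborel (ball (0::'a) 1)"
  define Q where "Q R = (\<integral>\<^sup>+ r \<in> {0..(1 - \<epsilon>) * R}. (\<integral>\<^sup>+ \<rho> \<in> {R..}. Jt_plus J e r \<rho> \<partial>lborel) \<partial>lborel)" for R
  have inner: "(\<integral>\<^sup>+\<rho>\<in>{R..}. Jt_plus J e r \<rho> \<partial>lborel) \<le> ennreal K * T (\<epsilon>*R) * V"
    if R: "R > 0" and r: "0 \<le> r" "r \<le> (1-\<epsilon>)*R" for R r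
  proof -
    have "(\<integral>\<^sup>+\<rho>\<in>{R..}. Jt_plus J e r \<rho> \<partial>lborel) = (\<integral>\<^sup>+\<rho>\<in>{R..}. sphere_nn_integral \<rho>
        (\<lambda>y::'a. if y \<bullet> (r *\<^sub>R e) \<ge> 0 then J (norm (r *\<^sub>R e - y)) else 0) \<partial>lborel)"
      unfolding Jt_plus_def ..
    also have "\<dots> \<le> ennreal K * T (\<epsilon>*R) * V" unfolding V_def
    proof (rule sphere_fubini)
      show "(\<lambda>y::'a. if y \<bullet> (r *\<^sub>R e) \<ge> 0 then J (norm (r *\<^sub>R e - y)) else 0) \<in> borel_measurable borel"
        by measurable
      show "\<And>y. 0 \<le> (if y \<bullet> (r *\<^sub>R e) \<ge> 0 then J (norm (r *\<^sub>R e - y)) else 0)" using Jn by simp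
      show "0 \<le> R" using R by simp
      fix u :: 'a assume u: "norm u = 1"
      define d where "d = r * (e \<bullet> u)"
      have d: "d \<le> r" unfolding d_def using abs_inner_le1[OF e u] r by (metis mult_left_mono mult.right_neutral)
      have "(\<integral>\<^sup>+\<rho>. ennreal (indicator {R..} \<rho> * (real ?N * \<rho>^(?N-1) *
              (if (\<rho> *\<^sub>R u) \<bullet> (r *\<^sub>R e) \<ge> 0 then J (norm (r *\<^sub>R e - \<rho> *\<^sub>R u)) else 0))) \<partial>lborel)
          \<le> (\<integral>\<^sup>+\<rho>. ennreal (indicator {R..} \<rho> * (real ?N * \<rho>^(?N-1) * J (sqrt (\<rho>^2 - 2*\<rho>*d + r^2)))) \<partial>lborel)"
      proof (rule nn_integral_mono)
        fix \<rho> :: real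
        show "ennreal (indicator {R..} \<rho> * (real ?N * \<rho>^(?N-1) *
              (if (\<rho> *\<^sub>R u) \<bullet> (r *\<^sub>R e) \<ge> 0 then J (norm (r *\<^sub>R e - \<rho> *\<^sub>R u)) else 0)))
          \<le> ennreal (indicator {R..} \<rho> * (real ?N * \<rho>^(?N-1) * J (sqrt (\<rho>^2 - 2*\<rho>*d + r^2))))"
        proof (cases "\<rho> \<ge> R")
          case True
          have "(if (\<rho> *\<^sub>R u) \<bullet> (r *\<^sub>R e) \<ge> 0 then J (norm (r *\<^sub>R e - \<rho> *\<^sub>R u)) else 0)
              \<le> J (sqrt (\<rho>^2 - 2*\<rho>*d + r^2))"
            using normeq[OF e u, of r \<rho>] Jn unfolding d_def by auto
          moreover have "real ?N * \<rho>^(?N-1) \<ge> 0" using True R by simp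
          ultimately show ?thesis using True by (auto intro!: ennreal_leI mult_left_mono)
        qed simp
      qed
      also have "\<dots> \<le> ennreal K * T (\<epsilon>*R)" unfolding K_def T_def
        by (rule stepB[OF Jm Jn dim eps(1) R]) (use plus_pw_bounds[OF eps R r d] in auto)
      finally show "(\<integral>\<^sup>+\<rho>. ennreal (indicator {R..} \<rho> * (real ?N * \<rho>^(?N-1) *
              (if (\<rho> *\<^sub>R u) \<bullet> (r *\<^sub>R e) \<ge> 0 then J (norm (r *\<^sub>R e - \<rho> *\<^sub>R u)) else 0))) \<partial>lborel)
          \<le> ennreal K * T (\<epsilon>*R)" .
    qed
    finally show ?thesis .
  qed
  define C where "C = ennreal K * V * ennreal (1/\<epsilon>)"
  have bound: "Q R \<le> C * S (\<epsilon>*R)" if R: "R > 0" for R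
  proof -
    have a: "0 \<le> (1-\<epsilon>)*R" "(1-\<epsilon>)*R \<le> R" using R eps by (auto simp: algebra_simps)
    have "Q R \<le> (ennreal K * T (\<epsilon>*R) * V) * ennreal ((1-\<epsilon>)*R)"
      unfolding Q_def by (rule outer[OF a(1)]) (use inner[OF R] in auto)
    also have "\<dots> = ennreal K * V * (ennreal ((1-\<epsilon>)*R) * T (\<epsilon>*R))" by (simp add: ac_simps)
    also have "\<dots> \<le> ennreal K * V * (ennreal (1/\<epsilon>) * S (\<epsilon>*R))"
      unfolding T_def S_def using dim
      by (intro mult_left_mono scale[OF Jm Jn _ eps(1) R a]) auto
    finally show ?thesis unfolding C_def by (simp add: ac_simps)
  qed
  have Cfin: "C < top" unfolding C_def V_def
    using emeasure_bounded_finite[of "ball (0::'a) 1"] by (simp add: ennreal_mult_less_top)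
  have "((\<lambda>R. S (\<epsilon>*R)) \<longlongrightarrow> 0) at_top"
  proof -
    have f: "filterlim (\<lambda>R::real. \<epsilon>*R) at_top at_top"
      by (rule filterlim_tendsto_pos_mult_at_top[OF tendsto_const eps(1) filterlim_ident])
    have "(S \<longlongrightarrow> 0) at_top" unfolding S_def by (rule tail[OF Jm Jn J1])
    from filterlim_compose[OF this f] show ?thesis by (simp add: o_def)
  qed
  from ennreal_tendsto_cmult[OF Cfin this] have lim: "((\<lambda>R. C * S (\<epsilon>*R)) \<longlongrightarrow> 0) at_top" by simp
  have "(Q \<longlongrightarrow> 0) at_top"
  proof (rule tendsto_sandwich[of "\<lambda>_. 0" Q _ "\<lambda>R. C * S (\<epsilon>*R)"])
    show "eventually (\<lambda>R. Q R \<le> C * S (\<epsilon>*R)) at_top"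
      using eventually_gt_at_top[of "0::real"] by eventually_elim (rule bound)
  qed (use lim in auto)
  then show ?thesis unfolding Q_def by simp
qed

lemma core_minus:
  fixes J :: "real \<Rightarrow> real" and e :: "'a::euclidean_space"
  assumes Jm[measurable]: "J \<in> borel_measurable borel" and Jn: "\<And>t. J t \<ge> 0"
    and dim: "DIM('a) \<ge> 2"
    and J1: "(\<lambda>r. J r * r ^ DIM('a)) integrable_on {0..}"
    and e: "norm e = 1"
  shows "((\<lambda>R. \<integral>\<^sup>+ r \<in> {0..R}. (\<integral>\<^sup>+ \<rho> \<in> {R..}. Jt_minus J e r \<rho> \<partial>lborel) \<partial>lborel) \<longlongrightarrow> 0) at_top"
proof -
  let ?N = "DIM('a)"
  define K where "K = real ?N / (1::real)^(?N-1)"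
  define T where "T L = (\<integral>\<^sup>+t. ennreal (indicator {L..} t * (J t * t^(?N-1))) \<partial>lborel)" for L
  define S where "S L = (\<integral>\<^sup>+t. ennreal (indicator {L..} t * (J t * t^?N)) \<partial>lborel)" for L
  define V where "V = emeasure lborel (ball (0::'a) 1)"
  define Q where "Q R = (\<integral>\<^sup>+ r \<in> {0..R}. (\<integral>\<^sup>+ \<rho> \<in> {R..}. Jt_minus J e r \<rho> \<partial>lborel) \<partial>lborel)" for R
  have inner: "(\<integral>\<^sup>+\<rho>\<in>{R..}. Jt_minus J e r \<rho> \<partial>lborel) \<le> ennreal K * T (1*R) * V"
    if R: "R > 0" and r: "0 \<le> r" "r \<le> R" for R r
  proof -
    have "(\<integral>\<^sup>+\<rho>\<in>{R..}. Jt_minus J e r \<rho> \<partial>lborel) = (\<integral>\<^sup>+\<rho>\<in>{R..}. sphere_nn_integral \<rho>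
        (\<lambda>y::'a. if y \<bullet> (r *\<^sub>R e) \<le> 0 then J (norm (r *\<^sub>R e - y)) else 0) \<partial>lborel)"
      unfolding Jt_minus_def ..
    also have "\<dots> \<le> ennreal K * T (1*R) * V" unfolding V_def
    proof (rule sphere_fubini)
      show "(\<lambda>y::'a. if y \<bullet> (r *\<^sub>R e) \<le> 0 then J (norm (r *\<^sub>R e - y)) else 0) \<in> borel_measurable borel"
        by measurable
      show "\<And>y. 0 \<le> (if y \<bullet> (r *\<^sub>R e) \<le> 0 then J (norm (r *\<^sub>R e - y)) else 0)" using Jn by simp
      show "0 \<le> R" using R by simp
      fix u :: 'a assume u: "norm u = 1"
      define d where "d = r * (e \<bullet> u)"
      have ip: "(\<rho> *\<^sub>R u) \<bullet> (r *\<^sub>R e) = \<rho> * d" for \<rho> unfolding d_def by (simp add: inner_commute)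
      show "(\<integral>\<^sup>+\<rho>. ennreal (indicator {R..} \<rho> * (real ?N * \<rho>^(?N-1) *
              (if (\<rho> *\<^sub>R u) \<bullet> (r *\<^sub>R e) \<le> 0 then J (norm (r *\<^sub>R e - \<rho> *\<^sub>R u)) else 0))) \<partial>lborel)
          \<le> ennreal K * T (1*R)"
      proof (cases "d \<le> 0")
        case d: True
        have "(\<integral>\<^sup>+\<rho>. ennreal (indicator {R..} \<rho> * (real ?N * \<rho>^(?N-1) *
              (if (\<rho> *\<^sub>R u) \<bullet> (r *\<^sub>R e) \<le> 0 then J (norm (r *\<^sub>R e - \<rho> *\<^sub>R u)) else 0))) \<partial>lborel)
            \<le> (\<integral>\<^sup>+\<rho>. ennreal (indicator {R..} \<rho> * (real ?N * \<rho>^(?N-1) * J (sqrt (\<rho>^2 - 2*\<rho>*d + r^2)))) \<partial>lborel)"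
        proof (rule nn_integral_mono)
          fix \<rho> :: real
          show "ennreal (indicator {R..} \<rho> * (real ?N * \<rho>^(?N-1) *
                (if (\<rho> *\<^sub>R u) \<bullet> (r *\<^sub>R e) \<le> 0 then J (norm (r *\<^sub>R e - \<rho> *\<^sub>R u)) else 0)))
            \<le> ennreal (indicator {R..} \<rho> * (real ?N * \<rho>^(?N-1) * J (sqrt (\<rho>^2 - 2*\<rho>*d + r^2))))"
          proof (cases "\<rho> \<ge> R")
            case True
            have "(if (\<rho> *\<^sub>R u) \<bullet> (r *\<^sub>R e) \<le> 0 then J (norm (r *\<^sub>R e - \<rho> *\<^sub>R u)) else 0)
                \<le> J (sqrt (\<rho>^2 - 2*\<rho>*d + r^2))"
              using normeq[OF e u, of r \<rho>] Jn unfolding d_def by auto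
            moreover have "real ?N * \<rho>^(?N-1) \<ge> 0" using True R by simp
            ultimately show ?thesis using True by (auto intro!: ennreal_leI mult_left_mono)
          qed simp
        qed
        also have "\<dots> \<le> ennreal K * T (1*R)" unfolding K_def T_def
          by (rule stepB[OF Jm Jn dim _ R]) (use minus_pw_bounds[OF R d] in auto)
        finally show ?thesis .
      next
        case False
        have "ennreal (indicator {R..} \<rho> * (real ?N * \<rho>^(?N-1) *
              (if (\<rho> *\<^sub>R u) \<bullet> (r *\<^sub>R e) \<le> 0 then J (norm (r *\<^sub>R e - \<rho> *\<^sub>R u)) else 0))) = 0" for \<rho>
        proof (cases "\<rho> \<ge> R")
          case True
          hence "\<rho> * d > 0" using R False by simp
          then show ?thesis unfolding ip by simp
        qed simp
        then show ?thesis by simp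
      qed
    qed
    finally show ?thesis .
  qed
  define C where "C = ennreal K * V * ennreal (1/1)"
  have bound: "Q R \<le> C * S (1*R)" if R: "R > 0" for R
  proof -
    have a: "0 \<le> R" "R \<le> R" using R by auto
    have "Q R \<le> (ennreal K * T (1*R) * V) * ennreal R"
      unfolding Q_def by (rule outer[OF a(1)]) (use inner[OF R] in auto)
    also have "\<dots> = ennreal K * V * (ennreal R * T (1*R))" by (simp add: ac_simps)
    also have "\<dots> \<le> ennreal K * V * (ennreal (1/1) * S (1*R))"
      unfolding T_def S_def using dim
      by (intro mult_left_mono scale[OF Jm Jn _ _ R a]) auto
    finally show ?thesis unfolding C_def by (simp add: ac_simps)
  qed
  have Cfin: "C < top" unfolding C_def V_def
    using emeasure_bounded_finite[of "ball (0::'a) 1"] by (simp add: ennreal_mult_less_top)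
  have "((\<lambda>R. S (1*R)) \<longlongrightarrow> 0) at_top"
  proof -
    have "(S \<longlongrightarrow> 0) at_top" unfolding S_def by (rule tail[OF Jm Jn J1])
    then show ?thesis by simp
  qed
  from ennreal_tendsto_cmult[OF Cfin this] have lim: "((\<lambda>R. C * S (1*R)) \<longlongrightarrow> 0) at_top" by simp
  have "(Q \<longlongrightarrow> 0) at_top"
  proof (rule tendsto_sandwich[of "\<lambda>_. 0" Q _ "\<lambda>R. C * S (1*R)"])
    show "eventually (\<lambda>R. Q R \<le> C * S (1*R)) at_top"
      using eventually_gt_at_top[of "0::real"] by eventually_elim (rule bound)
  qed (use lim in auto)
  then show ?thesis unfolding Q_def by simp
qed

theorem lemma2p4:
  fixes J :: "real \<Rightarrow> real" and e :: "'a::euclidean_space" and \<epsilon> :: real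
  assumes dim: "DIM('a) \<ge> 2"
    and J_cont: "continuous_on {0..} J"
    and J_bdd: "bounded (J ` {0..})"
    and J_nonneg: "\<And>r. r \<ge> 0 \<Longrightarrow> J r \<ge> 0"
    and J_0: "J 0 > 0"
    and J_int: "((\<lambda>x::'a. J (norm x)) has_integral 1) UNIV"
    and J1: "(\<lambda>r. J r * r ^ DIM('a)) integrable_on {0..}"
    and e: "norm e = 1"
    and eps: "0 < \<epsilon>" "\<epsilon> < 1"
  shows "((\<lambda>R. \<integral>\<^sup>+ r \<in> {0..(1 - \<epsilon>) * R}. (\<integral>\<^sup>+ \<rho> \<in> {R..}. Jt_plus J e r \<rho> \<partial>lborel) \<partial>lborel)
            \<longlongrightarrow> 0) at_top
       \<and> ((\<lambda>R. \<integral>\<^sup>+ r \<in> {0..R}. (\<integral>\<^sup>+ \<rho> \<in> {R..}. Jt_minus J e r \<rho> \<partial>lborel) \<partial>lborel)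
            \<longlongrightarrow> 0) at_top"
proof -
  define J' where "J' t = J \<bar>t\<bar>" for t
  have "continuous_on UNIV J'" unfolding J'_def
    by (rule continuous_on_compose2[OF J_cont continuous_on_rabs[OF continuous_on_id]]) auto
  hence J'm: "J' \<in> borel_measurable borel" by (rule borel_measurable_continuous_onI)
  have J'n: "J' t \<ge> 0" for t unfolding J'_def by (rule J_nonneg) simp
  have J'1: "(\<lambda>r. J' r * r ^ DIM('a)) integrable_on {0..}"
    by (rule integrable_eq[OF J1]) (simp add: J'_def)
  have Jnorm: "J' (norm v) = J (norm v)" for v :: 'a unfolding J'_def by simp
  have P: "Jt_plus J' e = Jt_plus J e" unfolding Jt_plus_def Jnorm ..
  have M: "Jt_minus J' e = Jt_minus J e" unfolding Jt_minus_def Jnorm ..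
  show ?thesis
    using core_plus[OF J'm J'n dim J'1 e eps] core_minus[OF J'm J'n dim J'1 e]
    unfolding P M by simp
qed

end
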